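(* Consider the lattice Boltzmann scheme described in the context under acoustic scaling ($\lambda>0$ fixed as $\Delta x\to 0$), with a local initialisation $w\in\mathbb{R}^q$ satisfying $w_1=1$ and, for every $r\in\{2,\dots,q\}$ such that the operator $\mathcal{G}_{1r}$ is nonzero, $w_r=\epsilon_r$. Then for every $n\in\mathbb{N}^*$ the modified equation of the $n$-th starting scheme reduces at order $O(1)$ to $\phi(0,x)=\phi(0,x)+O(\Delta x)$ and at the next order to $$\partial_t\phi(0,x)+\lambda\Big(\mathcal{G}_{11}+\sum_{r=2}^q\mathcal{G}_{1r}\epsilon_r\Big)\phi(0,x)=O(\Delta x),\qquad x\in\mathbb{R}^d,$$ so that the starting schemes are consistent at order $O(\Delta x)$ with the modified equation $\partial_t\phi+\lambda(\mathcal{G}_{11}+\sum_{r=2}^q\mathcal{G}_{1r}\epsilon_r)\phi=O(\Delta x)$ of the bulk finite difference scheme (evaluated at $t=0$). Moreover the initial datum of the conserved moment feeding the bulk and starting schemes equals the point-wise discretisation of the initial datum of the Cauchy problem.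
   Context: Fix $d\ge 1$, $q\ge 1$, velocities $c_1,\dots,c_q\in\mathbb{Z}^d$, invertible $M\in GL_q(\mathbb{R})$, $S=\mathrm{diag}(s_1,\dots,s_q)$ with $s_i\in(0,2]$ for $i\ge 2$, $s_1\in\mathbb{R}$, and $\epsilon\in\mathbb{R}^q$ with $\epsilon_1=1$; $K=I-S(I-\epsilon e_1^T)$. Space step $\Delta x$, lattice velocity $\lambda$, $\Delta t=\Delta x/\lambda$. Shifts $(x_\ell\phi)(x)=\phi(x-\Delta x e_\ell)$, $x^c=x_1^{c_1}\cdots x_d^{c_d}$; $T=M\mathrm{diag}(x^{c_1},\dots,x^{c_q})M^{-1}$, $E=TK$; time shift $(z\phi)(t)=\phi(t+\Delta t)$. The scheme is $m(t+\Delta t,\cdot)=Em(t,\cdot)$ with conserved moment $m_1$, targeting $\partial_t u+V\cdot\nabla u=0$, $u(0,\cdot)=u^\circ$; $m_1^\circ$ is the point-wise lattice discretisation of $u^\circ$. $\mathcal{G}=M\mathrm{diag}(c_1\cdot\nabla,\dots,c_q\cdot\nabla)M^{-1}$. Initialisation $m(0,x)=w m_1^\circ(x)$. The $n$-th starting scheme is $m_1(n\Delta t,x)=(E^nw)_1m_1^\circ(x)$; its modified equation is obtained by substituting a smooth $\phi$ into $(z^n\phi)(0,x)=((E^nw)_1\phi(0,\cdot))(x)$, Taylor-expanding in $\Delta x$ and dividing the first-order terms by $n\Delta x/\lambda$. The bulk finite difference scheme is $z^{Q+1-q}\det(zI-E)m_1=0$, where $Q$ is the number of $i\in\{2,\dots,q\}$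 with $s_i\neq1$; its modified equation at leading order is $\partial_t\phi+\lambda(\mathcal{G}_{11}+\sum_{r\ge2}\mathcal{G}_{1r}\epsilon_r)\phi=O(\Delta x)$. *)

theory Defs
  imports "HOL-Analysis.Analysis"
begin

text \<open>Conventions: the q moments/velocities are indexed by 0..q-1; index 0 is the
conserved moment (paper index 1). Matrices are functions nat => nat => real
restricted to indices below q.\<close>

fun dderiv :: "('a::real_normed_vector \<Rightarrow> real) \<Rightarrow> 'a list \<Rightarrow> 'a \<Rightarrow> real" where
  "dderiv f [] = f"
| "dderiv f (v # vs) = (\<lambda>z. frechet_derivative (dderiv f vs) (at z) v)"

definition smooth_fun :: "('a::real_normed_vector \<Rightarrow> real) \<Rightarrow> bool" where
  "smooth_fun f \<longleftrightarrow> (\<forall>vs. continuous_on UNIV (dderiv f vs) \<and> (\<forall>z. dderiv f vs differentiable (at z)))"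

definition vel :: "int ^ 'd \<Rightarrow> real ^ 'd" where
  "vel c = (\<chi> l. real_of_int (c $ l))"

text \<open>Relaxation matrix K = I - S (I - eps e_1^T).\<close>
definition Kmat :: "(nat \<Rightarrow> real) \<Rightarrow> (nat \<Rightarrow> real) \<Rightarrow> nat \<Rightarrow> nat \<Rightarrow> real" where
  "Kmat s eps k l = (if k = l then 1 else 0) - s k * ((if k = l then 1 else 0) - (if l = 0 then eps k else 0))"

text \<open>One step of the scheme, E = T K with T = M diag(x^{c_j}) M^{-1}, acting on a vector of
functions of space; (x^c f)(x) = f(x - dx c).\<close>
definition lbm_E :: "nat \<Rightarrow> (nat \<Rightarrow> nat \<Rightarrow> real) \<Rightarrow> (nat \<Rightarrow> nat \<Rightarrow> real) \<Rightarrow> (nat \<Rightarrow> int ^ 'd)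
    \<Rightarrow> (nat \<Rightarrow> real) \<Rightarrow> (nat \<Rightarrow> real) \<Rightarrow> real
    \<Rightarrow> (nat \<Rightarrow> real ^ 'd \<Rightarrow> real) \<Rightarrow> (nat \<Rightarrow> real ^ 'd \<Rightarrow> real)" where
  "lbm_E q M Minv c s eps dx m = (\<lambda>i x. \<Sum>j<q. M i j * (\<Sum>k<q. Minv j k *
      (\<Sum>l<q. Kmat s eps k l * m l (x - dx *\<^sub>R vel (c j)))))"

definition start_op :: "nat \<Rightarrow> (nat \<Rightarrow> nat \<Rightarrow> real) \<Rightarrow> (nat \<Rightarrow> nat \<Rightarrow> real) \<Rightarrow> (nat \<Rightarrow> int ^ 'd)
    \<Rightarrow> (nat \<Rightarrow> real) \<Rightarrow> (nat \<Rightarrow> real) \<Rightarrow> (nat \<Rightarrow> real) \<Rightarrow> nat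
    \<Rightarrow> (real ^ 'd \<Rightarrow> real) \<Rightarrow> real \<Rightarrow> real ^ 'd \<Rightarrow> real" where
  "start_op q M Minv c s eps w n u0 dx x =
     ((lbm_E q M Minv c s eps dx) ^^ n) (\<lambda>k y. w k * u0 y) 0 x"

text \<open>Entry (i,r) of G = M diag(c_1.grad, ..., c_q.grad) M^{-1}, applied to f at y.\<close>
definition lbm_G :: "nat \<Rightarrow> (nat \<Rightarrow> nat \<Rightarrow> real) \<Rightarrow> (nat \<Rightarrow> nat \<Rightarrow> real) \<Rightarrow> (nat \<Rightarrow> int ^ 'd)
    \<Rightarrow> nat \<Rightarrow> nat \<Rightarrow> (real ^ 'd \<Rightarrow> real) \<Rightarrow> real ^ 'd \<Rightarrow> real" where
  "lbm_G q M Minv c i r f y = (\<Sum>j<q. M i j * Minv j r * frechet_derivative f (at y) (vel (c j)))"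

definition G_nonzero :: "nat \<Rightarrow> (nat \<Rightarrow> nat \<Rightarrow> real) \<Rightarrow> (nat \<Rightarrow> nat \<Rightarrow> real) \<Rightarrow> (nat \<Rightarrow> int ^ 'd)
    \<Rightarrow> nat \<Rightarrow> nat \<Rightarrow> bool" where
  "G_nonzero q M Minv c i r \<longleftrightarrow> (\<exists>f y. smooth_fun f \<and> lbm_G q M Minv c i r f y \<noteq> 0)"

end

theory Submission
  imports Defs
begin


lemma smooth_diff: "smooth_fun f \<Longrightarrow> dderiv f vs differentiable (at z)"
  unfolding smooth_fun_def by blast

lemma smooth_cont: "smooth_fun f \<Longrightarrow> continuous_on UNIV (dderiv f vs)"
  unfolding smooth_fun_def by blast

lemma dir_deriv:
  fixes \<phi> :: "'a::real_normed_vector \<Rightarrow> real"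
  assumes "smooth_fun \<phi>"
  shows "DERIV (\<lambda>h. dderiv \<phi> (replicate m W) (P + h *\<^sub>R W)) t :> dderiv \<phi> (replicate (Suc m) W) (P + t *\<^sub>R W)"
proof -
  let ?g = "dderiv \<phi> (replicate m W)"
  let ?z = "P + t *\<^sub>R W"
  have g: "(?g has_derivative frechet_derivative ?g (at ?z)) (at ?z)"
    using smooth_diff[OF assms] frechet_derivative_works by blast
  have lin: "linear (frechet_derivative ?g (at ?z))"
    using g has_derivative_linear by blast
  have a: "((\<lambda>h. P + h *\<^sub>R W) has_derivative (\<lambda>h. h *\<^sub>R W)) (at t)"
    by (auto intro!: derivative_eq_intros)
  have "((\<lambda>h. ?g (P + h *\<^sub>R W)) has_derivative (\<lambda>h. frechet_derivative ?g (at ?z) (h *\<^sub>R W))) (at t)"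
    using has_derivative_compose[OF a g] by simp
  moreover have "(\<lambda>h. frechet_derivative ?g (at ?z) (h *\<^sub>R W)) = (\<lambda>h. dderiv \<phi> (replicate (Suc m) W) ?z * h)"
    using lin by (simp add: linear_scale mult.commute)
  ultimately show ?thesis unfolding has_field_derivative_def by (simp add: mult.commute[of _ "frechet_derivative _ _ _"])
qed

lemma taylor2:
  fixes \<phi> :: "'a::real_normed_vector \<Rightarrow> real"
  assumes "smooth_fun \<phi>"
  shows "\<exists>C. \<forall>h. \<bar>h\<bar> \<le> 1 \<longrightarrow> \<bar>\<phi> (P + h *\<^sub>R W) - \<phi> P - h * dderiv \<phi> [W] P\<bar> \<le> C * h^2"
proof -
  define diff where "diff m h = dderiv \<phi> (replicate m W) (P + h *\<^sub>R W)" for m h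
  have D: "\<forall>m x. DERIV (diff m) x :> diff (Suc m) x"
    unfolding diff_def using dir_deriv[OF assms] by blast
  have c2: "continuous_on {-1..1} (diff 2)"
    unfolding diff_def
    by (rule continuous_on_compose2[OF smooth_cont[OF assms]]) (auto intro!: continuous_intros)
  have "bounded (diff 2 ` {-1..1})"
    by (rule compact_imp_bounded, rule compact_continuous_image[OF c2]) simp
  then obtain B where B: "\<And>t. t \<in> {-1..1} \<Longrightarrow> \<bar>diff 2 t\<bar> \<le> B"
    unfolding bounded_iff by force
  show ?thesis
  proof (intro exI allI impI)
    fix h :: real assume h: "\<bar>h\<bar> \<le> 1"
    obtain t where t: "\<bar>t\<bar> \<le> \<bar>h\<bar>" and eq: "diff 0 h = (\<Sum>m<2. (diff m 0 / fact m) * h ^ m) + (diff 2 t / fact 2) * h ^ 2"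
      using Maclaurin_all_le[of diff "diff 0", OF refl D] by blast
    have e0: "diff 0 h = \<phi> (P + h *\<^sub>R W)" "diff 0 0 = \<phi> P" "diff 1 0 = dderiv \<phi> [W] P"
      by (simp_all add: diff_def)
    have "\<phi> (P + h *\<^sub>R W) - \<phi> P - h * dderiv \<phi> [W] P = diff 2 t / 2 * h^2"
      using eq e0 by (simp add: numeral_2_eq_2)
    moreover have "\<bar>diff 2 t\<bar> \<le> B" proof -
      have "- 1 \<le> t \<and> t \<le> 1" using t h by linarith
      then show ?thesis using B by simp
    qed
    moreover have "\<bar>diff 2 t / 2 * h^2\<bar> \<le> B * h^2"
    proof -
      have "\<bar>diff 2 t / 2 * h^2\<bar> = \<bar>diff 2 t\<bar> / 2 * h^2" by (simp add: abs_mult)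
      also have "\<dots> \<le> B * h^2" using \<open>\<bar>diff 2 t\<bar> \<le> B\<close>
        by (intro mult_right_mono) auto
      finally show ?thesis .
    qed
    ultimately show "\<bar>\<phi> (P + h *\<^sub>R W) - \<phi> P - h * dderiv \<phi> [W] P\<bar> \<le> B * h^2"
      by simp
  qed
qed

lemma deriv0:
  fixes \<phi> :: "'a::real_normed_vector \<Rightarrow> real"
  assumes "smooth_fun \<phi>"
  shows "DERIV (\<lambda>h. \<phi> (P + h *\<^sub>R W)) 0 :> dderiv \<phi> [W] P"
  using dir_deriv[OF assms, of 0 W P 0] by simp

lemma linear_smooth:
  assumes "bounded_linear f"
  shows "smooth_fun f"
proof -
  have fd: "frechet_derivative f (at z) = f" for z
    using frechet_derivative_at[OF bounded_linear_imp_has_derivative[OF assms]] by simp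
  have cd: "frechet_derivative (\<lambda>z. k) (at z) = (\<lambda>h. 0)" for k :: real and z :: 'a
    using frechet_derivative_at[OF has_derivative_const] by simp
  have "dderiv f vs = f \<or> (\<exists>k. dderiv f vs = (\<lambda>z. k))" for vs
  proof (induction vs)
    case Nil then show ?case by simp
  next
    case (Cons v vs)
    then show ?case using fd cd by auto
  qed
  moreover have "continuous_on UNIV f" "\<And>z. f differentiable (at z)"
    using assms linear_continuous_on bounded_linear_imp_differentiable by blast+
  ultimately show ?thesis unfolding smooth_fun_def
    by (metis continuous_on_const differentiable_const)
qed



definition Amat :: "nat \<Rightarrow> (nat \<Rightarrow> nat \<Rightarrow> real) \<Rightarrow> (nat \<Rightarrow> nat \<Rightarrow> real) \<Rightarrow> (nat \<Rightarrow> real) \<Rightarrow> (nat \<Rightarrow> real)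
   \<Rightarrow> nat \<Rightarrow> nat \<Rightarrow> nat \<Rightarrow> real" where
  "Amat q M Minv s eps j i l = M i j * (\<Sum>r<q. Minv j r * Kmat s eps r l)"

fun coef :: "nat \<Rightarrow> (nat \<Rightarrow> nat \<Rightarrow> real) \<Rightarrow> (nat \<Rightarrow> nat \<Rightarrow> real) \<Rightarrow> (nat \<Rightarrow> real) \<Rightarrow> (nat \<Rightarrow> real)
   \<Rightarrow> nat list \<Rightarrow> nat \<Rightarrow> nat \<Rightarrow> real" where
  "coef q M Minv s eps [] i l = (if i = l then 1 else 0)"
| "coef q M Minv s eps (j # js) i l = (\<Sum>k<q. Amat q M Minv s eps j i k * coef q M Minv s eps js k l)"

fun Sv :: "(nat \<Rightarrow> int ^ 'd) \<Rightarrow> nat list \<Rightarrow> real ^ 'd" where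
  "Sv c [] = 0"
| "Sv c (j # js) = vel (c j) + Sv c js"

definition Ls :: "nat \<Rightarrow> nat \<Rightarrow> nat list set" where
  "Ls q n = {xs. set xs \<subseteq> {..<q} \<and> length xs = n}"

lemma finite_Ls: "finite (Ls q n)"
  unfolding Ls_def using finite_lists_length_eq[of "{..<q}" n] by simp

lemma Ls0: "Ls q 0 = {[]}" unfolding Ls_def by auto

lemma sum_Ls_Suc: "(\<Sum>js\<in>Ls q (Suc n). f js) = (\<Sum>j<q. \<Sum>js\<in>Ls q n. f (j # js))"
proof -
  have "Ls q (Suc n) = (\<lambda>(xs, n). n#xs) ` (Ls q n \<times> {..<q})"
    unfolding Ls_def by (rule lists_length_Suc_eq)
  moreover have "inj_on (\<lambda>p. snd p # fst p) (Ls q n \<times> {..<q})"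
    by (auto simp: inj_on_def)
  ultimately have "(\<Sum>js\<in>Ls q (Suc n). f js) = (\<Sum>p\<in>Ls q n \<times> {..<q}. f (snd p # fst p))"
    by (simp add: sum.reindex case_prod_beta)
  also have "\<dots> = (\<Sum>js\<in>Ls q n. \<Sum>j<q. f (j # js))"
    by (simp add: sum.cartesian_product case_prod_beta)
  also have "\<dots> = (\<Sum>j<q. \<Sum>js\<in>Ls q n. f (j # js))"
    by (rule sum.swap)
  finally show ?thesis .
qed

lemma E_expand:
  "lbm_E q M Minv c s eps dx m i x = (\<Sum>j<q. \<Sum>l<q. Amat q M Minv s eps j i l * m l (x - dx *\<^sub>R vel (c j)))"
proof -
  have "lbm_E q M Minv c s eps dx m i x = (\<Sum>j<q. \<Sum>k<q. \<Sum>l<q. M i j * Minv j k * Kmat s eps k l * m l (x - dx *\<^sub>R vel (c j)))"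
    unfolding lbm_E_def by (simp add: sum_distrib_left mult.assoc)
  also have "\<dots> = (\<Sum>j<q. \<Sum>l<q. \<Sum>k<q. M i j * Minv j k * Kmat s eps k l * m l (x - dx *\<^sub>R vel (c j)))"
    by (rule sum.cong[OF refl], rule sum.swap)
  also have "\<dots> = (\<Sum>j<q. \<Sum>l<q. Amat q M Minv s eps j i l * m l (x - dx *\<^sub>R vel (c j)))"
    unfolding Amat_def by (simp add: sum_distrib_left sum_distrib_right mult.assoc)
  finally show ?thesis .
qed

lemma rep:
  "i < q \<Longrightarrow> (lbm_E q M Minv c s eps dx ^^ n) m i x =
     (\<Sum>js\<in>Ls q n. \<Sum>l<q. coef q M Minv s eps js i l * m l (x - dx *\<^sub>R Sv c js))"
proof (induction n arbitrary: i x)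
  case 0
  have "(\<Sum>l<q. (if i = l then 1 else 0) * m l x) = (\<Sum>l<q. if i = l then m l x else 0)"
    by (rule sum.cong) auto
  then show ?case using 0 by (simp add: Ls0)
next
  case (Suc n)
  let ?A = "Amat q M Minv s eps" and ?C = "coef q M Minv s eps"
  have "(lbm_E q M Minv c s eps dx ^^ Suc n) m i x
      = (\<Sum>j<q. \<Sum>k<q. ?A j i k * (\<Sum>js\<in>Ls q n. \<Sum>l<q. ?C js k l * m l (x - dx *\<^sub>R vel (c j) - dx *\<^sub>R Sv c js)))"
    by (simp add: E_expand Suc.IH)
  also have "\<dots> = (\<Sum>j<q. \<Sum>js\<in>Ls q n. \<Sum>k<q. \<Sum>l<q. ?A j i k * ?C js k l * m l (x - dx *\<^sub>R Sv c (j # js)))"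
    by (simp add: sum_distrib_left mult.assoc algebra_simps sum.swap[of _ "{..<q}" "Ls q n"])
  also have "\<dots> = (\<Sum>j<q. \<Sum>js\<in>Ls q n. \<Sum>l<q. \<Sum>k<q. ?A j i k * ?C js k l * m l (x - dx *\<^sub>R Sv c (j # js)))"
    by (rule sum.cong[OF refl], rule sum.cong[OF refl], rule sum.swap)
  also have "\<dots> = (\<Sum>js\<in>Ls q (Suc n). \<Sum>l<q. ?C js i l * m l (x - dx *\<^sub>R Sv c js))"
    by (simp add: sum_Ls_Suc sum_distrib_right)
  finally show ?case .
qed



definition bw where
  "bw q M Minv s eps w n i = (\<Sum>js\<in>Ls q n. \<Sum>l<q. coef q M Minv s eps js i l * w l)"

definition Ysc where
  "Ysc q M Minv s eps c w L n i = (\<Sum>js\<in>Ls q n. \<Sum>l<q. coef q M Minv s eps js i l * w l * L (Sv c js))"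

lemma perm4: "(\<Sum>a\<in>A. \<Sum>b\<in>B. \<Sum>c\<in>C. \<Sum>d\<in>D. f a b c d) = (\<Sum>d\<in>D. \<Sum>a\<in>A. \<Sum>b\<in>B. \<Sum>c\<in>C. f a b c d)"
proof -
  have "(\<Sum>a\<in>A. \<Sum>b\<in>B. \<Sum>c\<in>C. \<Sum>d\<in>D. f a b c d) = (\<Sum>a\<in>A. \<Sum>b\<in>B. \<Sum>d\<in>D. \<Sum>c\<in>C. f a b c d)"
    by (rule sum.cong[OF refl], rule sum.cong[OF refl], rule sum.swap)
  also have "\<dots> = (\<Sum>a\<in>A. \<Sum>d\<in>D. \<Sum>b\<in>B. \<Sum>c\<in>C. f a b c d)"
    by (rule sum.cong[OF refl], rule sum.swap)
  also have "\<dots> = (\<Sum>d\<in>D. \<Sum>a\<in>A. \<Sum>b\<in>B. \<Sum>c\<in>C. f a b c d)"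
    by (rule sum.swap)
  finally show ?thesis .
qed

lemma perm3: "(\<Sum>b\<in>B. \<Sum>c\<in>C. \<Sum>d\<in>D. f b c d) = (\<Sum>d\<in>D. \<Sum>b\<in>B. \<Sum>c\<in>C. f b c d)"
proof -
  have "(\<Sum>b\<in>B. \<Sum>c\<in>C. \<Sum>d\<in>D. f b c d) = (\<Sum>b\<in>B. \<Sum>d\<in>D. \<Sum>c\<in>C. f b c d)"
    by (rule sum.cong[OF refl], rule sum.swap)
  also have "\<dots> = (\<Sum>d\<in>D. \<Sum>b\<in>B. \<Sum>c\<in>C. f b c d)"
    by (rule sum.swap)
  finally show ?thesis .
qed

lemma sumA:
  assumes "i < q" and M_inv1: "\<forall>i<q. \<forall>k<q. (\<Sum>j<q. M i j * Minv j k) = (if i = k then 1 else 0)"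
  shows "(\<Sum>j<q. Amat q M Minv s eps j i k) = Kmat s eps i k"
proof -
  have "(\<Sum>j<q. Amat q M Minv s eps j i k) = (\<Sum>r<q. (\<Sum>j<q. M i j * Minv j r) * Kmat s eps r k)"
  proof -
    have "(\<Sum>j<q. Amat q M Minv s eps j i k) = (\<Sum>j<q. \<Sum>r<q. M i j * Minv j r * Kmat s eps r k)"
      unfolding Amat_def by (simp add: sum_distrib_left mult.assoc)
    also have "\<dots> = (\<Sum>r<q. \<Sum>j<q. M i j * Minv j r * Kmat s eps r k)" by (rule sum.swap)
    finally show ?thesis by (simp add: sum_distrib_right)
  qed
  also have "\<dots> = (\<Sum>r<q. if i = r then Kmat s eps r k else 0)"
    using M_inv1 assms(1) by (intro sum.cong) auto
  finally show ?thesis using assms(1) by simp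
qed

lemma Kmul:
  assumes "r < q" "0 < q"
  shows "(\<Sum>k<q. Kmat s eps r k * y k) = y r - s r * (y r - eps r * y 0)"
proof -
  have pt: "Kmat s eps r k * y k = (if r = k then y k else 0) - (if r = k then s r * y k else 0) + (if k = 0 then s r * eps r * y k else 0)" for k
    unfolding Kmat_def by (simp add: algebra_simps)
  have "(\<Sum>k<q. Kmat s eps r k * y k) = (\<Sum>k<q. (if r = k then y k else 0)) - (\<Sum>k<q. (if r = k then s r * y k else 0)) + (\<Sum>k<q. (if k = 0 then s r * eps r * y k else 0))"
    unfolding pt by (simp only: sum.distrib sum_subtractf)
  then show ?thesis using assms by (simp add: algebra_simps)
qed

lemma bw_Suc:
  assumes "i < q" and M_inv1: "\<forall>i<q. \<forall>k<q. (\<Sum>j<q. M i j * Minv j k) = (if i = k then 1 else 0)"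
  shows "bw q M Minv s eps w (Suc n) i = (\<Sum>k<q. Kmat s eps i k * bw q M Minv s eps w n k)"
proof -
  let ?A = "Amat q M Minv s eps" and ?C = "coef q M Minv s eps"
  have "bw q M Minv s eps w (Suc n) i = (\<Sum>j<q. \<Sum>js\<in>Ls q n. \<Sum>l<q. \<Sum>k<q. ?A j i k * (?C js k l * w l))"
    unfolding bw_def by (simp add: sum_Ls_Suc sum_distrib_right mult.assoc)
  also have "\<dots> = (\<Sum>k<q. \<Sum>j<q. \<Sum>js\<in>Ls q n. \<Sum>l<q. ?A j i k * (?C js k l * w l))"
    by (rule perm4)
  also have "\<dots> = (\<Sum>k<q. \<Sum>j<q. ?A j i k * bw q M Minv s eps w n k)"
    unfolding bw_def by (simp add: sum_distrib_left)
  also have "\<dots> = (\<Sum>k<q. (\<Sum>j<q. ?A j i k) * bw q M Minv s eps w n k)"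
    by (simp add: sum_distrib_right)
  finally show ?thesis using sumA[OF assms] by simp
qed

lemma bw_0: "i < q \<Longrightarrow> bw q M Minv s eps w 0 i = w i"
proof -
  assume i: "i < q"
  have "(\<Sum>l<q. (if i = l then 1 else 0) * w l) = (\<Sum>l<q. if i = l then w l else 0)"
    by (rule sum.cong) auto
  then show ?thesis using i by (simp add: bw_def Ls0)
qed

lemma bw_props:
  assumes q: "0 < q" and M_inv1: "\<forall>i<q. \<forall>k<q. (\<Sum>j<q. M i j * Minv j k) = (if i = k then 1 else 0)"
    and eps1: "eps 0 = 1" and w1: "w 0 = 1"
  shows "bw q M Minv s eps w n 0 = 1 \<and> (\<forall>r<q. w r = eps r \<longrightarrow> bw q M Minv s eps w n r = eps r)"
proof (induction n)
  case 0 then show ?case using q w1 by (simp add: bw_0)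
next
  case (Suc n)
  show ?case
    using Suc q eps1 by (simp add: bw_Suc[OF _ M_inv1] Kmul)
qed

lemma Ysc_Suc:
  assumes "i < q" and M_inv1: "\<forall>i<q. \<forall>k<q. (\<Sum>j<q. M i j * Minv j k) = (if i = k then 1 else 0)"
    and L: "linear L"
  shows "Ysc q M Minv s eps c w L (Suc n) i =
     (\<Sum>j<q. (\<Sum>k<q. Amat q M Minv s eps j i k * bw q M Minv s eps w n k) * L (vel (c j)))
     + (\<Sum>k<q. Kmat s eps i k * Ysc q M Minv s eps c w L n k)"
proof -
  let ?A = "Amat q M Minv s eps" and ?C = "coef q M Minv s eps"
  have "Ysc q M Minv s eps c w L (Suc n) i = (\<Sum>j<q. \<Sum>js\<in>Ls q n. \<Sum>l<q. \<Sum>k<q. ?A j i k * (?C js k l * w l) * (L (vel (c j)) + L (Sv c js)))"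
    unfolding Ysc_def by (simp add: sum_Ls_Suc sum_distrib_right mult.assoc linear_add[OF L])
  also have "\<dots> = (\<Sum>j<q. \<Sum>js\<in>Ls q n. \<Sum>l<q. \<Sum>k<q. ?A j i k * (?C js k l * w l) * L (vel (c j)))
      + (\<Sum>j<q. \<Sum>js\<in>Ls q n. \<Sum>l<q. \<Sum>k<q. ?A j i k * (?C js k l * w l) * L (Sv c js))"
    by (simp add: distrib_left sum.distrib)
  also have "\<dots> = (\<Sum>j<q. \<Sum>k<q. \<Sum>js\<in>Ls q n. \<Sum>l<q. ?A j i k * (?C js k l * w l) * L (vel (c j)))
      + (\<Sum>k<q. \<Sum>j<q. \<Sum>js\<in>Ls q n. \<Sum>l<q. ?A j i k * (?C js k l * w l) * L (Sv c js))"
  proof -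
    have "(\<Sum>j<q. \<Sum>js\<in>Ls q n. \<Sum>l<q. \<Sum>k<q. ?A j i k * (?C js k l * w l) * L (vel (c j)))
      = (\<Sum>j<q. \<Sum>k<q. \<Sum>js\<in>Ls q n. \<Sum>l<q. ?A j i k * (?C js k l * w l) * L (vel (c j)))"
      by (rule sum.cong[OF refl], rule perm3)
    moreover have "(\<Sum>j<q. \<Sum>js\<in>Ls q n. \<Sum>l<q. \<Sum>k<q. ?A j i k * (?C js k l * w l) * L (Sv c js))
      = (\<Sum>k<q. \<Sum>j<q. \<Sum>js\<in>Ls q n. \<Sum>l<q. ?A j i k * (?C js k l * w l) * L (Sv c js))"
      by (rule perm4)
    ultimately show ?thesis by simp
  qed
  also have "\<dots> = (\<Sum>j<q. \<Sum>k<q. (?A j i k * bw q M Minv s eps w n k) * L (vel (c j)))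
     + (\<Sum>k<q. \<Sum>j<q. ?A j i k * Ysc q M Minv s eps c w L n k)"
    unfolding bw_def Ysc_def by (simp add: sum_distrib_right sum_distrib_left mult.assoc)
  also have "\<dots> = (\<Sum>j<q. (\<Sum>k<q. ?A j i k * bw q M Minv s eps w n k) * L (vel (c j)))
     + (\<Sum>k<q. (\<Sum>j<q. ?A j i k) * Ysc q M Minv s eps c w L n k)"
    by (simp add: sum_distrib_right)
  finally show ?thesis using sumA[OF assms(1,2)] by simp
qed



lemma Ysc_closed:
  assumes q: "0 < q" and M_inv1: "\<forall>i<q. \<forall>k<q. (\<Sum>j<q. M i j * Minv j k) = (if i = k then 1 else 0)"
    and eps1: "eps 0 = 1" and w1: "w 0 = 1" and L: "linear L"
    and H: "\<forall>r<q. w r = eps r \<or> (\<Sum>j<q. M 0 j * Minv j r * L (vel (c j))) = 0"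
  shows "Ysc q M Minv s eps c w L n 0 = real n * (\<Sum>r<q. eps r * (\<Sum>j<q. M 0 j * Minv j r * L (vel (c j))))"
proof (induction n)
  case 0
  have "L 0 = 0" using L linear_0 by blast
  then show ?case by (simp add: Ysc_def Ls0)
next
  case (Suc n)
  let ?A = "Amat q M Minv s eps" and ?b = "bw q M Minv s eps w"
  let ?g = "\<lambda>r. (\<Sum>j<q. M 0 j * Minv j r * L (vel (c j)))"
  have k0: "(\<Sum>k<q. Kmat s eps 0 k * Ysc q M Minv s eps c w L n k) = Ysc q M Minv s eps c w L n 0"
    using Kmul[OF q q] eps1 by simp
  have a: "(\<Sum>k<q. ?A j 0 k * ?b n k) = M 0 j * (\<Sum>r<q. Minv j r * ?b (Suc n) r)" for j
  proof -
    have "(\<Sum>k<q. ?A j 0 k * ?b n k) = (\<Sum>k<q. \<Sum>r<q. M 0 j * Minv j r * Kmat s eps r k * ?b n k)"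
      unfolding Amat_def by (simp add: sum_distrib_left sum_distrib_right mult.assoc)
    also have "\<dots> = (\<Sum>r<q. \<Sum>k<q. M 0 j * Minv j r * Kmat s eps r k * ?b n k)" by (rule sum.swap)
    also have "\<dots> = (\<Sum>r<q. M 0 j * Minv j r * ?b (Suc n) r)"
      by (rule sum.cong[OF refl]) (simp add: bw_Suc[OF _ M_inv1] sum_distrib_left mult.assoc)
    finally show ?thesis by (simp add: sum_distrib_left mult.assoc)
  qed
  have "(\<Sum>j<q. (\<Sum>k<q. ?A j 0 k * ?b n k) * L (vel (c j))) = (\<Sum>j<q. \<Sum>r<q. M 0 j * Minv j r * L (vel (c j)) * ?b (Suc n) r)"
    unfolding a by (simp add: sum_distrib_left sum_distrib_right mult_ac)
  also have "\<dots> = (\<Sum>r<q. \<Sum>j<q. M 0 j * Minv j r * L (vel (c j)) * ?b (Suc n) r)" by (rule sum.swap)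
  also have "\<dots> = (\<Sum>r<q. ?b (Suc n) r * ?g r)"
    by (simp add: sum_distrib_left mult_ac)
  also have "\<dots> = (\<Sum>r<q. eps r * ?g r)"
  proof (rule sum.cong[OF refl])
    fix r assume "r \<in> {..<q}"
    then have r: "r < q" by simp
    show "?b (Suc n) r * ?g r = eps r * ?g r"
      using H r bw_props[of q M Minv eps w s "Suc n", OF q M_inv1 eps1 w1] by auto
  qed
  finally have first: "(\<Sum>j<q. (\<Sum>k<q. ?A j 0 k * ?b n k) * L (vel (c j))) = (\<Sum>r<q. eps r * ?g r)" .
  show ?case
    unfolding Ysc_Suc[OF q M_inv1 L] k0 first Suc by (simp add: algebra_simps)
qed



lemma bigo_from_bound:
  fixes f :: "real \<Rightarrow> real"
  assumes "\<delta> > 0" and "\<And>dx. 0 < dx \<Longrightarrow> dx < \<delta> \<Longrightarrow> \<bar>f dx\<bar> \<le> K * dx"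
  shows "f \<in> O[at_right 0](\<lambda>dx. dx)"
proof (rule bigoI[where c = K])
  show "\<forall>\<^sub>F dx in at_right 0. norm (f dx) \<le> K * norm dx"
    using eventually_at_right_real[OF assms(1)]
    by (rule eventually_mono) (use assms(2) in auto)
qed

lemma notGnz:
  assumes "\<not> G_nonzero q M Minv c 0 r" and L: "linear L"
  shows "(\<Sum>j<q. M 0 j * Minv j r * L (vel (c j))) = 0"
proof -
  define v where "v = (\<Sum>j<q. (M 0 j * Minv j r) *\<^sub>R vel (c j))"
  define f where "f = (\<lambda>z. v \<bullet> z)"
  have bl: "bounded_linear f" unfolding f_def by (rule bounded_linear_inner_right)
  have sm: "smooth_fun f" by (rule linear_smooth[OF bl])
  have fd: "frechet_derivative f (at 0) = f"
    using frechet_derivative_at[OF bounded_linear_imp_has_derivative[OF bl]] by simp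
  have "lbm_G q M Minv c 0 r f 0 = 0" using assms(1) sm unfolding G_nonzero_def by blast
  then have "(\<Sum>j<q. M 0 j * Minv j r * (v \<bullet> vel (c j))) = 0"
    unfolding lbm_G_def fd by (simp add: f_def)
  moreover have "v \<bullet> v = (\<Sum>j<q. M 0 j * Minv j r * (v \<bullet> vel (c j)))"
    by (subst (2) v_def) (simp add: inner_sum_right)
  ultimately have "v = 0" by simp
  moreover have "L v = (\<Sum>j<q. M 0 j * Minv j r * L (vel (c j)))"
    unfolding v_def by (simp add: linear_sum[OF L] linear_scale[OF L])
  ultimately show ?thesis using linear_0[OF L] by simp
qed



lemma main_part:
  fixes q :: nat and M Minv :: "nat \<Rightarrow> nat \<Rightarrow> real" and c :: "nat \<Rightarrow> int ^ 'd"
    and s eps w :: "nat \<Rightarrow> real" and lam :: real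
    and \<phi> :: "real \<times> (real ^ 'd) \<Rightarrow> real"
  assumes q_pos: "q \<ge> 1"
    and M_inv1: "\<forall>i<q. \<forall>k<q. (\<Sum>j<q. M i j * Minv j k) = (if i = k then 1 else 0)"
    and eps1: "eps 0 = 1"
    and lam_pos: "lam > 0"
    and w1: "w 0 = 1"
    and w_eps: "\<forall>r\<in>{1..<q}. G_nonzero q M Minv c 0 r \<longrightarrow> w r = eps r"
    and n1: "n \<ge> 1" and sm: "smooth_fun \<phi>"
  shows "(\<lambda>dx. start_op q M Minv c s eps w n (\<lambda>y. \<phi> (0, y)) dx x - \<phi> (0, x))
              \<in> O[at_right 0](\<lambda>dx. dx) \<and>
           (\<lambda>dx. \<phi> (real n * dx / lam, x) - start_op q M Minv c s eps w n (\<lambda>y. \<phi> (0, y)) dx x)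
              \<in> O[at_right 0](\<lambda>dx. dx) \<and>
           (\<lambda>dx. (\<phi> (real n * dx / lam, x) - start_op q M Minv c s eps w n (\<lambda>y. \<phi> (0, y)) dx x)
                    / (real n * dx / lam)
                 - (deriv (\<lambda>t. \<phi> (t, x)) 0
                    + lam * (lbm_G q M Minv c 0 0 (\<lambda>y. \<phi> (0, y)) x
                             + (\<Sum>r\<in>{1..<q}. lbm_G q M Minv c 0 r (\<lambda>y. \<phi> (0, y)) x * eps r))))
              \<in> O[at_right 0](\<lambda>dx. dx)"
proof -
  have q: "0 < q" using q_pos by simp
  define u0 where "u0 = (\<lambda>y. \<phi> (0, y))"
  define D\<phi> where "D\<phi> = frechet_derivative \<phi> (at (0, x))"
  define L where "L = (\<lambda>v. D\<phi> (0, v))"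
  have phid: "(\<phi> has_derivative D\<phi>) (at (0, x))"
    unfolding D\<phi>_def using smooth_diff[OF sm, of "[]" "(0, x)"] frechet_derivative_works[THEN iffD1] by simp
  have linD: "linear D\<phi>" using phid has_derivative_linear by blast
  have pd: "((\<lambda>y. (0::real, y)) has_derivative (\<lambda>v. (0, v))) (at x)"
    by (auto intro!: derivative_eq_intros)
  have du0: "(u0 has_derivative L) (at x)"
    unfolding u0_def L_def using has_derivative_compose[OF pd, of \<phi> D\<phi>] phid by simp
  have linL: "linear L" using du0 has_derivative_linear by blast
  have fdu0: "frechet_derivative u0 (at x) = L" using frechet_derivative_at[OF du0] by simp
  define g where "g r = (\<Sum>j<q. M 0 j * Minv j r * L (vel (c j)))" for r
  have Gg: "lbm_G q M Minv c 0 r u0 x = g r" for r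
    unfolding lbm_G_def fdu0 g_def by simp
  have H: "\<forall>r<q. w r = eps r \<or> (\<Sum>j<q. M 0 j * Minv j r * L (vel (c j))) = 0"
  proof (intro allI impI)
    fix r assume r: "r < q"
    show "w r = eps r \<or> (\<Sum>j<q. M 0 j * Minv j r * L (vel (c j))) = 0"
    proof (cases "r = 0")
      case True then show ?thesis using w1 eps1 by simp
    next
      case False
      then have "r \<in> {1..<q}" using r by simp
      then show ?thesis using w_eps notGnz[OF _ linL, of q M Minv c r] by blast
    qed
  qed
  define Gs where "Gs = (\<Sum>r<q. eps r * g r)"
  have Gs_eq: "Gs = lbm_G q M Minv c 0 0 u0 x + (\<Sum>r\<in>{1..<q}. lbm_G q M Minv c 0 r u0 x * eps r)"
  proof -
    have "{..<q} = insert 0 {1..<q}" using q by auto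
    then show ?thesis unfolding Gs_def Gg using eps1 by (simp add: mult.commute)
  qed
  define b where "b js = (\<Sum>l<q. coef q M Minv s eps js 0 l * w l)" for js
  define F where "F dx = start_op q M Minv c s eps w n u0 dx x" for dx
  have Frep: "F dx = (\<Sum>js\<in>Ls q n. b js * u0 (x - dx *\<^sub>R Sv c js))" for dx
    unfolding F_def start_op_def rep[OF q] b_def by (simp add: sum_distrib_right mult.assoc)
  have sumb: "(\<Sum>js\<in>Ls q n. b js) = 1"
    using bw_props[of q M Minv eps w s n, OF q M_inv1 eps1 w1] unfolding bw_def b_def by simp
  have sumbL: "(\<Sum>js\<in>Ls q n. b js * L (Sv c js)) = real n * Gs"
    using Ysc_closed[OF q M_inv1 eps1 w1 linL H, of s n] unfolding Ysc_def b_def Gs_def g_def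
    by (simp add: sum_distrib_right)
  have "\<forall>js\<in>Ls q n. \<exists>C. \<forall>h. \<bar>h\<bar> \<le> 1 \<longrightarrow> \<bar>u0 (x - h *\<^sub>R Sv c js) - u0 x + h * L (Sv c js)\<bar> \<le> C * h^2"
  proof
    fix js
    obtain C where C: "\<forall>h. \<bar>h\<bar> \<le> 1 \<longrightarrow> \<bar>\<phi> ((0, x) + h *\<^sub>R (0, - Sv c js)) - \<phi> (0, x) - h * dderiv \<phi> [(0, - Sv c js)] (0, x)\<bar> \<le> C * h^2"
      using taylor2[OF sm] by blast
    have "dderiv \<phi> [(0, - Sv c js)] (0, x) = - L (Sv c js)"
      unfolding L_def using linear_neg[OF linD, of "(0, Sv c js)"] by (simp add: D\<phi>_def)
    then show "\<exists>C. \<forall>h. \<bar>h\<bar> \<le> 1 \<longrightarrow> \<bar>u0 (x - h *\<^sub>R Sv c js) - u0 x + h * L (Sv c js)\<bar> \<le> C * h^2"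
      using C unfolding u0_def by (intro exI[of _ C]) auto
  qed
  then obtain Cf where Cf: "\<And>js h. js \<in> Ls q n \<Longrightarrow> \<bar>h\<bar> \<le> 1 \<Longrightarrow> \<bar>u0 (x - h *\<^sub>R Sv c js) - u0 x + h * L (Sv c js)\<bar> \<le> Cf js * h^2"
    by metis
  define C1 where "C1 = (\<Sum>js\<in>Ls q n. \<bar>b js\<bar> * Cf js)"
  have R1: "\<bar>F h - u0 x + h * real n * Gs\<bar> \<le> C1 * h^2" if h: "\<bar>h\<bar> \<le> 1" for h
  proof -
    have "F h - u0 x + h * real n * Gs = (\<Sum>js\<in>Ls q n. b js * (u0 (x - h *\<^sub>R Sv c js) - u0 x + h * L (Sv c js)))"
      unfolding Frep using sumb sumbL
      by (simp add: algebra_simps sum.distrib sum_subtractf sum_distrib_left[symmetric] sum_distrib_right[symmetric])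
    also have "\<bar>\<dots>\<bar> \<le> (\<Sum>js\<in>Ls q n. \<bar>b js\<bar> * (Cf js * h^2))"
      by (rule order_trans[OF sum_abs], rule sum_mono) (simp add: abs_mult Cf h mult_left_mono)
    finally show ?thesis unfolding C1_def by (simp add: sum_distrib_right mult.assoc)
  qed
  define d where "d = dderiv \<phi> [(1, 0)] (0, x)"
  have pt: "(0, x) + h *\<^sub>R (1::real, 0::real^'d) = (h, x)" for h by simp
  obtain C2 where C2: "\<And>h. \<bar>h\<bar> \<le> 1 \<Longrightarrow> \<bar>\<phi> (h, x) - \<phi> (0, x) - h * d\<bar> \<le> C2 * h^2"
    using taylor2[OF sm, of "(0, x)" "(1, 0)"] unfolding pt d_def by blast
  have "DERIV (\<lambda>h. \<phi> ((0, x) + h *\<^sub>R (1::real, 0::real^'d))) 0 :> d"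
    unfolding d_def by (rule deriv0[OF sm])
  then have dd: "deriv (\<lambda>t. \<phi> (t, x)) 0 = d" unfolding pt by (rule DERIV_imp_deriv)
  define a where "a = real n / lam"
  have a: "a > 0" unfolding a_def using n1 lam_pos by simp
  have adx: "real n * dx / lam = a * dx" for dx unfolding a_def by simp
  have na: "real n / a = lam" unfolding a_def using n1 lam_pos by simp
  define \<delta> where "\<delta> = min 1 (1 / a)"
  have \<delta>: "\<delta> > 0" unfolding \<delta>_def using a by simp
  have small: "\<bar>dx\<bar> \<le> 1 \<and> \<bar>a * dx\<bar> \<le> 1 \<and> dx^2 \<le> dx" if "0 < dx" "dx < \<delta>" for dx
  proof -
    have "dx \<le> 1" "dx \<le> 1 / a" using that unfolding \<delta>_def by auto
    then have "a * dx \<le> 1" using a by (simp add: field_simps)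
    moreover have "dx * dx \<le> 1 * dx" using \<open>dx \<le> 1\<close> that(1) by (intro mult_right_mono) auto
    ultimately show ?thesis using that a \<open>dx \<le> 1\<close> by (simp add: power2_eq_square)
  qed
  have part1: "\<bar>F dx - u0 x\<bar> \<le> (\<bar>C1\<bar> + real n * \<bar>Gs\<bar>) * dx" if "0 < dx" "dx < \<delta>" for dx
  proof -
    have r: "\<bar>F dx - u0 x + dx * real n * Gs\<bar> \<le> C1 * dx^2" using R1 small[OF that] by blast
    have "C1 * dx^2 \<le> \<bar>C1\<bar> * dx" using small[OF that]
      by (metis abs_ge_self abs_ge_zero mult_mono zero_le_power2)
    moreover have "\<bar>dx * real n * Gs\<bar> = real n * \<bar>Gs\<bar> * dx" using that by (simp add: abs_mult)
    ultimately show ?thesis using r by (simp add: algebra_simps)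
  qed
  define R1' where "R1' dx = F dx - u0 x + dx * real n * Gs" for dx
  define R2 where "R2 dx = \<phi> (a * dx, x) - \<phi> (0, x) - a * dx * d" for dx
  have bR1: "\<bar>R1' dx\<bar> \<le> \<bar>C1\<bar> * dx^2" if "0 < dx" "dx < \<delta>" for dx
    using R1[of dx] small[OF that] unfolding R1'_def
    by (meson abs_ge_self mult_right_mono order_trans zero_le_power2)
  have bR2: "\<bar>R2 dx\<bar> \<le> \<bar>C2\<bar> * a^2 * dx^2" if "0 < dx" "dx < \<delta>" for dx
  proof -
    have "\<bar>R2 dx\<bar> \<le> C2 * (a * dx)^2" using C2[of "a * dx"] small[OF that] unfolding R2_def by simp
    also have "\<dots> \<le> \<bar>C2\<bar> * (a * dx)^2" by (intro mult_right_mono) auto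
    finally show ?thesis by (simp add: power_mult_distrib mult.assoc)
  qed
  have u0x: "u0 x = \<phi> (0, x)" unfolding u0_def by simp
  have part2: "\<bar>\<phi> (a * dx, x) - F dx\<bar> \<le> (\<bar>C2\<bar> * a^2 + a * \<bar>d\<bar> + \<bar>C1\<bar> + real n * \<bar>Gs\<bar>) * dx" if "0 < dx" "dx < \<delta>" for dx
  proof -
    have e: "\<phi> (a * dx, x) - F dx = R2 dx + a * dx * d - R1' dx + dx * real n * Gs"
      unfolding R1'_def R2_def u0x by simp
    have "\<bar>R2 dx\<bar> \<le> \<bar>C2\<bar> * a^2 * dx"
      using bR2[OF that] small[OF that] by (meson abs_ge_zero order_trans mult_left_mono zero_le_power2 mult_nonneg_nonneg)
    moreover have "\<bar>R1' dx\<bar> \<le> \<bar>C1\<bar> * dx"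
      using bR1[OF that] small[OF that] by (meson abs_ge_zero order_trans mult_left_mono)
    moreover have "\<bar>a * dx * d\<bar> = a * \<bar>d\<bar> * dx" "\<bar>dx * real n * Gs\<bar> = real n * \<bar>Gs\<bar> * dx"
      using that a by (simp_all add: abs_mult)
    ultimately show ?thesis unfolding e by (simp add: algebra_simps) linarith
  qed
  have part3: "\<bar>(\<phi> (a * dx, x) - F dx) / (a * dx) - (d + lam * Gs)\<bar> \<le> (\<bar>C2\<bar> * a + \<bar>C1\<bar> / a) * dx" if "0 < dx" "dx < \<delta>" for dx
  proof -
    have adx0: "a * dx > 0" using a that by simp
    have adxn: "a * dx \<noteq> 0" using adx0 by linarith
    have an: "a \<noteq> 0" using a by linarith
    have e2: "\<phi> (a * dx, x) - F dx = (R2 dx - R1' dx) + (a * dx) * (d + lam * Gs)"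
    proof -
      have "real n = lam * a" using na a by (simp add: field_simps)
      then show ?thesis unfolding R1'_def R2_def u0x by (simp add: algebra_simps)
    qed
    have "(\<phi> (a * dx, x) - F dx) / (a * dx) - (d + lam * Gs) = (R2 dx - R1' dx) / (a * dx)"
      unfolding e2 using adxn by (simp add: add_divide_distrib)
    also have "\<bar>\<dots>\<bar> = \<bar>R2 dx - R1' dx\<bar> / (a * dx)"
      using adx0 by (simp add: abs_divide)
    also have "\<dots> \<le> (\<bar>C2\<bar> * a^2 * dx^2 + \<bar>C1\<bar> * dx^2) / (a * dx)"
    proof (rule divide_right_mono)
      show "\<bar>R2 dx - R1' dx\<bar> \<le> \<bar>C2\<bar> * a^2 * dx^2 + \<bar>C1\<bar> * dx^2"
        using bR1[OF that] bR2[OF that] by linarith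
      show "0 \<le> a * dx" using adx0 by linarith
    qed
    also have "\<bar>C2\<bar> * a^2 * dx^2 + \<bar>C1\<bar> * dx^2 = ((\<bar>C2\<bar> * a + \<bar>C1\<bar> / a) * dx) * (a * dx)"
      using an by (simp add: algebra_simps power2_eq_square)
    also have "\<dots> / (a * dx) = (\<bar>C2\<bar> * a + \<bar>C1\<bar> / a) * dx"
      using adxn by simp
    finally show ?thesis .
  qed
  have P1: "(\<lambda>dx. F dx - u0 x) \<in> O[at_right 0](\<lambda>dx. dx)"
    by (rule bigo_from_bound[OF \<delta> part1])
  have P2: "(\<lambda>dx. \<phi> (a * dx, x) - F dx) \<in> O[at_right 0](\<lambda>dx. dx)"
    by (rule bigo_from_bound[OF \<delta> part2])
  have P3: "(\<lambda>dx. (\<phi> (a * dx, x) - F dx) / (a * dx) - (d + lam * Gs)) \<in> O[at_right 0](\<lambda>dx. dx)"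
    by (rule bigo_from_bound[OF \<delta> part3])
  show ?thesis
    using P1 P2 P3 unfolding adx dd Gs_eq F_def u0_def by simp
qed

theorem corollary1:
  fixes q :: nat and M Minv :: "nat \<Rightarrow> nat \<Rightarrow> real" and c :: "nat \<Rightarrow> int ^ 'd"
    and s eps w :: "nat \<Rightarrow> real" and lam :: real
  assumes q_pos: "q \<ge> 1"
    and M_inv1: "\<forall>i<q. \<forall>k<q. (\<Sum>j<q. M i j * Minv j k) = (if i = k then 1 else 0)"
    and M_inv2: "\<forall>i<q. \<forall>k<q. (\<Sum>j<q. Minv i j * M j k) = (if i = k then 1 else 0)"
    and s_range: "\<forall>i\<in>{1..<q}. 0 < s i \<and> s i \<le> 2"
    and eps1: "eps 0 = 1"
    and lam_pos: "lam > 0"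
    and w1: "w 0 = 1"
    and w_eps: "\<forall>r\<in>{1..<q}. G_nonzero q M Minv c 0 r \<longrightarrow> w r = eps r"
  shows "(\<forall>n\<ge>1. \<forall>\<phi> :: real \<times> (real ^ 'd) \<Rightarrow> real. \<forall>x. smooth_fun \<phi> \<longrightarrow>
           (\<lambda>dx. start_op q M Minv c s eps w n (\<lambda>y. \<phi> (0, y)) dx x - \<phi> (0, x))
              \<in> O[at_right 0](\<lambda>dx. dx) \<and>
           (\<lambda>dx. \<phi> (real n * dx / lam, x) - start_op q M Minv c s eps w n (\<lambda>y. \<phi> (0, y)) dx x)
              \<in> O[at_right 0](\<lambda>dx. dx) \<and>
           (\<lambda>dx. (\<phi> (real n * dx / lam, x) - start_op q M Minv c s eps w n (\<lambda>y. \<phi> (0, y)) dx x)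
                    / (real n * dx / lam)
                 - (deriv (\<lambda>t. \<phi> (t, x)) 0
                    + lam * (lbm_G q M Minv c 0 0 (\<lambda>y. \<phi> (0, y)) x
                             + (\<Sum>r\<in>{1..<q}. lbm_G q M Minv c 0 r (\<lambda>y. \<phi> (0, y)) x * eps r))))
              \<in> O[at_right 0](\<lambda>dx. dx))
        \<and> (\<forall>u0 dx y. start_op q M Minv c s eps w 0 u0 dx y = u0 y)"
  proof (rule conjI)
  show "\<forall>n\<ge>1. \<forall>\<phi> :: real \<times> (real ^ 'd) \<Rightarrow> real. \<forall>x. smooth_fun \<phi> \<longrightarrow>
           (\<lambda>dx. start_op q M Minv c s eps w n (\<lambda>y. \<phi> (0, y)) dx x - \<phi> (0, x))
              \<in> O[at_right 0](\<lambda>dx. dx) \<and>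
           (\<lambda>dx. \<phi> (real n * dx / lam, x) - start_op q M Minv c s eps w n (\<lambda>y. \<phi> (0, y)) dx x)
              \<in> O[at_right 0](\<lambda>dx. dx) \<and>
           (\<lambda>dx. (\<phi> (real n * dx / lam, x) - start_op q M Minv c s eps w n (\<lambda>y. \<phi> (0, y)) dx x)
                    / (real n * dx / lam)
                 - (deriv (\<lambda>t. \<phi> (t, x)) 0
                    + lam * (lbm_G q M Minv c 0 0 (\<lambda>y. \<phi> (0, y)) x
                             + (\<Sum>r\<in>{1..<q}. lbm_G q M Minv c 0 r (\<lambda>y. \<phi> (0, y)) x * eps r))))
              \<in> O[at_right 0](\<lambda>dx. dx)"
    using main_part[OF q_pos M_inv1 eps1 lam_pos w1 w_eps] by blast
  show "\<forall>u0 dx y. start_op q M Minv c s eps w 0 u0 dx y = u0 y"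
    unfolding start_op_def using w1 by simp
qed

end
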